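(* Let $\Gamma$ be a single edge $ab$ with label $m\ge3$, let $X$ be the Cayley complex of the standard presentation of $A_\Gamma$, and let $\Lambda\subset X$ be a hypergraph. Suppose $\gamma$ is an edge-path in $X$ whose first and last edges are vertices of $\Lambda$ and none of whose other edges is a vertex of $\Lambda$. Then the word read along $\gamma$ is not of the form $a^kba^l$, $b^kab^l$, or $a^kb^l$ with $k,l\in\mathbb{Z}\setminus\{0\}$.
   Context: For a labelled edge $ab$ with label $m$, $A_\Gamma=\langle a,b\mid p_m(a,b)=p_m(b,a)\rangle$ where $p_m(a,b)$ is the alternating word $aba\cdots$ of length $m$. The Cayley complex $X$ has vertex set $A_\Gamma$, a directed edge labelled $s$ from $g$ to $gs$ for $s\in\{a,b\}$, and a $2m$-gon $2$-cell glued along each closed path reading $p_m(a,b)p_m(b,a)^{-1}$. The word read along an edge-path records the label of each edge with exponent $+1$ or $-1$ according to whether it is traversed along or against its direction. Two edges of the boundary of a $2m$-gon are opposite if they are at distance $m-1$ along the boundary. A hypergraph in $X$ is a connected component of the graph whose vertices are the edges of $X$ and which has, for each $2$-cell $R$ and each pair of opposite edges of $\partial R$, an edge joining them. *)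

theory Defs
  imports Main
begin

datatype gen = GA | GB

text \<open>A letter is a generator with exponent +1 (True) or -1 (False).\<close>
type_synonym letter = "gen \<times> bool"
type_synonym word = "letter list"

definition inv_word :: "word \<Rightarrow> word" where
  "inv_word w = rev (map (\<lambda>(s, e). (s, \<not> e)) w)"

definition alt_word :: "nat \<Rightarrow> gen \<Rightarrow> gen \<Rightarrow> word" where
  "alt_word m g h = map (\<lambda>i. (if even i then g else h, True)) [0..<m]"

definition relator :: "nat \<Rightarrow> word" where
  "relator m = alt_word m GA GB @ inv_word (alt_word m GB GA)"

text \<open>Equality in A_Gamma = < a, b | p_m(a,b) = p_m(b,a) >: the equivalence
  relation on words generated by free reduction and insertion of the relator.\<close>
inductive aeq :: "nat \<Rightarrow> word \<Rightarrow> word \<Rightarrow> bool" for m where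
  aeq_refl: "aeq m u u"
| aeq_sym: "aeq m u v \<Longrightarrow> aeq m v u"
| aeq_trans: "aeq m u v \<Longrightarrow> aeq m v w \<Longrightarrow> aeq m u w"
| aeq_free: "aeq m (u @ [(s, e), (s, \<not> e)] @ v) (u @ v)"
| aeq_rel: "aeq m (u @ relator m @ v) (u @ v)"

text \<open>Group elements (vertices of the Cayley complex X) are equivalence classes of words.\<close>
definition cls :: "nat \<Rightarrow> word \<Rightarrow> word set" where
  "cls m w = {v. aeq m w v}"

text \<open>An edge of X is determined by its initial vertex g and its label s;
  it goes from g to g s.\<close>
type_synonym edge = "word set \<times> gen"

definition edges_X :: "nat \<Rightarrow> edge set" where
  "edges_X m = {(cls m w, s) | w s. True}"

text \<open>The edge traversed when reading letter x from the vertex represented by w: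
  along its direction if x has exponent +1 (edge from w to w s), against its
  direction if the exponent is -1 (edge from w s^{-1} to w).\<close>
definition letter_edge :: "nat \<Rightarrow> word \<Rightarrow> letter \<Rightarrow> edge" where
  "letter_edge m w x = (if snd x then (cls m w, fst x) else (cls m (w @ [x]), fst x))"

text \<open>An edge-path in X is determined by its initial vertex (represented by the
  word v) and the word w read along it; its i-th edge (i < length w) is:\<close>
definition path_edge :: "nat \<Rightarrow> word \<Rightarrow> word \<Rightarrow> nat \<Rightarrow> edge" where
  "path_edge m v w i = letter_edge m (v @ take i w) (w ! i)"

text \<open>Opposite edges in a 2-cell: the 2-cell at vertex g has boundary the closed
  path reading the relator (length 2m) from g; edges at positions i and i+m
  (mod 2m) are at distance m-1 along the boundary.\<close>
definition hyp_adj :: "nat \<Rightarrow> edge \<Rightarrow> edge \<Rightarrow> bool" where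
  "hyp_adj m e f \<longleftrightarrow> (\<exists>g i. i < 2 * m \<and>
      e = path_edge m g (relator m) i \<and>
      f = path_edge m g (relator m) ((i + m) mod (2 * m)))"

definition is_hypergraph :: "nat \<Rightarrow> edge set \<Rightarrow> bool" where
  "is_hypergraph m L \<longleftrightarrow> (\<exists>e \<in> edges_X m. L = {f. (hyp_adj m)\<^sup>*\<^sup>* e f})"

definition pow_word :: "gen \<Rightarrow> int \<Rightarrow> word" where
  "pow_word g k = replicate (nat \<bar>k\<bar>) (g, k > 0)"

end

theory Submission
  imports Defs
begin

fun cg :: "gen \<Rightarrow> int" where "cg GA = 0" | "cg GB = 2"

definition comp :: "int \<times> int \<Rightarrow> int \<times> int \<Rightarrow> int \<times> int" where
  "comp A B = (fst A * fst B, fst A * snd B + snd A)"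

fun rho :: "word \<Rightarrow> int \<times> int" where
  "rho [] = (1, 0)"
| "rho (x # xs) = comp (-1, cg (fst x)) (rho xs)"

definition Q :: "word \<Rightarrow> gen \<Rightarrow> int" where
  "Q p s = 2 * snd (rho p) + fst (rho p) * cg s"

lemma rho_append: "rho (u @ v) = comp (rho u) (rho v)"
  by (induction u) (auto simp: comp_def algebra_simps)

lemma rho_sign: "fst (rho u) = 1 \<or> fst (rho u) = -1"
  by (induction u) (auto simp: comp_def)

lemma Q_conj: "Q (g @ p) s = fst (rho g) * Q p s + 2 * snd (rho g)"
  by (simp add: Q_def rho_append comp_def algebra_simps)

lemma Q_snoc: "Q (p @ [x]) (fst x) = Q p (fst x)"
  by (simp add: Q_def rho_append comp_def algebra_simps)

lemma rho_rep: "rho (replicate n (s, e)) = (if even n then (1, 0) else (-1, cg s))"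
  by (induction n) (auto simp: comp_def)

definition altw :: "nat \<Rightarrow> gen \<Rightarrow> gen \<Rightarrow> bool \<Rightarrow> word" where
  "altw n g h e = map (\<lambda>i. (if even i then g else h, e)) [0..<n]"

lemma altw_0[simp]: "altw 0 g h e = []"
  by (simp add: altw_def)

lemma altw_Suc: "altw (Suc n) g h e = altw n g h e @ [(if even n then g else h, e)]"
  by (simp add: altw_def)

lemma rho_altw_AB: "rho (altw n GA GB e) = ((-1)^n, -2 * int (n div 2))"
  by (induction n) (auto simp: altw_Suc rho_append comp_def elim: oddE)

lemma rho_altw_BA: "rho (altw n GB GA e) = ((-1)^n, 2 * int ((n+1) div 2))"
  by (induction n) (auto simp: altw_Suc rho_append comp_def elim: oddE)

lemma Q_altw_AB: "Q (altw n GA GB e) (if even n then GA else GB) = - 2 * int n"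
  by (cases "even n") (auto simp: Q_def rho_altw_AB elim!: evenE oddE)

lemma Q_altw_BA: "Q (altw n GB GA e) (if even n then GB else GA) = 2 * int n + 2"
  by (cases "even n") (auto simp: Q_def rho_altw_BA elim!: evenE oddE)

lemma take_altw: "i \<le> n \<Longrightarrow> take i (altw n g h e) = altw i g h e"
  by (simp add: altw_def take_map)

lemma nth_altw: "i < n \<Longrightarrow> altw n g h e ! i = (if even i then g else h, e)"
  by (simp add: altw_def)

lemma length_altw[simp]: "length (altw n g h e) = n"
  by (simp add: altw_def)

lemma alt_word_altw: "alt_word m g h = altw m g h True"
  by (simp add: alt_word_def altw_def)

lemma inv_alt: "inv_word (alt_word m GB GA) =
   altw m (if odd m then GB else GA) (if odd m then GA else GB) False"
proof (rule nth_equalityI)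
  show "length (inv_word (alt_word m GB GA)) = length (altw m (if odd m then GB else GA) (if odd m then GA else GB) False)"
    by (simp add: inv_word_def alt_word_def)
next
  fix i assume "i < length (inv_word (alt_word m GB GA))"
  then have i: "i < m" by (simp add: inv_word_def alt_word_def)
  have "inv_word (alt_word m GB GA) ! i = (if even (m - 1 - i) then GB else GA, False)"
    using i by (simp add: inv_word_def alt_word_def rev_nth)
  also have "\<dots> = altw m (if odd m then GB else GA) (if odd m then GA else GB) False ! i"
    using i by (auto simp: nth_altw)
  finally show "inv_word (alt_word m GB GA) ! i = altw m (if odd m then GB else GA) (if odd m then GA else GB) False ! i" .
qed

lemma relator_altw: "relator m = altw m GA GB True @
   altw m (if odd m then GB else GA) (if odd m then GA else GB) False"
  unfolding relator_def inv_alt by (simp add: alt_word_altw)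

lemma qq: "i < 2 * m \<Longrightarrow> Q (take i (relator m)) (fst (relator m ! i)) = - 2 * int i"
proof (cases "i < m")
  case True
  assume "i < 2 * m"
  then show ?thesis using True Q_altw_AB[of i True]
    by (simp add: relator_altw take_altw nth_append nth_altw)
next
  case False
  assume i2: "i < 2 * m"
  define j where "j = i - m"
  have i: "i = m + j" and j: "j < m" using False i2 by (auto simp: j_def)
  have r1: "take i (relator m) = altw m GA GB True @ altw j (if odd m then GB else GA) (if odd m then GA else GB) False"
    using i j by (simp add: relator_altw take_altw)
  have r2: "fst (relator m ! i) = (if even j then (if odd m then GB else GA) else (if odd m then GA else GB))"
    using i j by (simp add: relator_altw nth_append nth_altw)
  show ?thesis
  proof (cases "odd m")
    case True
    then show ?thesis using Q_altw_BA[of j False] r1 r2 i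
      by (auto simp: Q_conj rho_altw_AB elim!: oddE)
  next
    case False
    then show ?thesis using Q_altw_AB[of j False] r1 r2 i
      by (auto simp: Q_conj rho_altw_AB elim!: evenE)
  qed
qed

lemma rho_relator: "rho (relator m) = (1, - 2 * int m)"
  by (cases "odd m") (auto simp: relator_altw rho_append rho_altw_AB rho_altw_BA comp_def elim!: oddE evenE)

definition req :: "nat \<Rightarrow> int \<times> int \<Rightarrow> int \<times> int \<Rightarrow> bool" where
  "req m A B \<longleftrightarrow> fst A = fst B \<and> snd A mod (2 * int m) = snd B mod (2 * int m)"

lemma rho_aeq: "aeq m u v \<Longrightarrow> req m (rho u) (rho v)"
proof (induction rule: aeq.induct)
  case (aeq_refl u) then show ?case by (simp add: req_def)
next
  case (aeq_sym u v) then show ?case by (simp add: req_def)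
next
  case (aeq_trans u v w) then show ?case by (simp add: req_def)
next
  case (aeq_free u s e v)
  have "rho [(s, e), (s, \<not> e)] = (1, 0)" by (simp add: comp_def)
  then show ?case by (simp add: rho_append req_def comp_def)
next
  case (aeq_rel u v)
  obtain a b where u: "rho u = (a, b)" by fastforce
  obtain c d where v: "rho v = (c, d)" by fastforce
  have "(a * (d - 2 * int m) + b) = (a * d + b) + (- a) * (2 * int m)" by (simp add: algebra_simps)
  then have "(a * (d - 2 * int m) + b) mod (2 * int m) = (a * d + b) mod (2 * int m)"
    by (metis mod_mult_self1)
  then show ?case using u v by (simp add: rho_append rho_relator req_def comp_def)
qed

definition Rf :: "nat \<Rightarrow> edge \<Rightarrow> int set" where
  "Rf m e = {Q u (snd e) mod (2 * int m) | u. u \<in> fst e}"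

lemma Q_req: "req m (rho u) (rho v) \<Longrightarrow> Q u s mod (2 * int m) = Q v s mod (2 * int m)"
proof -
  assume r: "req m (rho u) (rho v)"
  let ?M = "2 * int m"
  have h1: "snd (rho u) mod ?M = snd (rho v) mod ?M" and h2: "fst (rho u) = fst (rho v)"
    using r unfolding req_def by auto
  have "(2 * snd (rho u)) mod ?M = (2 * snd (rho v)) mod ?M"
    by (rule mod_mult_cong[OF refl h1])
  then have "(2 * snd (rho u) + fst (rho u) * cg s) mod ?M = (2 * snd (rho v) + fst (rho v) * cg s) mod ?M"
    unfolding h2 by (rule mod_add_cong[OF _ refl])
  then show ?thesis unfolding Q_def .
qed

lemma Rf_cls: "Rf m (cls m w, s) = {Q w s mod (2 * int m)}"
proof (rule set_eqI)
  fix z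
  have h: "\<And>u. aeq m w u \<Longrightarrow> Q u s mod (2 * int m) = Q w s mod (2 * int m)"
  proof -
    fix u assume "aeq m w u"
    then have "aeq m u w" by (rule aeq_sym)
    then show "Q u s mod (2 * int m) = Q w s mod (2 * int m)" by (intro Q_req rho_aeq)
  qed
  show "z \<in> Rf m (cls m w, s) \<longleftrightarrow> z \<in> {Q w s mod (2 * int m)}"
  proof
    assume "z \<in> Rf m (cls m w, s)"
    then obtain u where "z = Q u s mod (2 * int m)" "aeq m w u"
      unfolding Rf_def cls_def by auto
    then show "z \<in> {Q w s mod (2 * int m)}" using h by simp
  next
    assume "z \<in> {Q w s mod (2 * int m)}"
    then have "z = Q w s mod (2 * int m)" by simp
    moreover have "w \<in> cls m w" unfolding cls_def by (simp add: aeq_refl)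
    ultimately show "z \<in> Rf m (cls m w, s)" unfolding Rf_def by force
  qed
qed

lemma Rf_letter: "Rf m (letter_edge m p x) = {Q p (fst x) mod (2 * int m)}"
proof (cases "snd x")
  case True
  then show ?thesis by (simp add: letter_edge_def Rf_cls)
next
  case False
  then have "Rf m (letter_edge m p x) = {Q (p @ [x]) (fst x) mod (2 * int m)}"
    by (simp add: letter_edge_def Rf_cls)
  then show ?thesis by (simp only: Q_snoc)
qed

lemma Rf_path: "Rf m (path_edge m v w i) = {Q (v @ take i w) (fst (w ! i)) mod (2 * int m)}"
  by (simp add: path_edge_def Rf_letter)

lemma Rf_adj: "hyp_adj m e f \<Longrightarrow> Rf m e = Rf m f"
proof -
  assume "hyp_adj m e f"
  then obtain g i where i: "i < 2 * m" and e: "e = path_edge m g (relator m) i"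
    and f: "f = path_edge m g (relator m) ((i + m) mod (2 * m))"
    unfolding hyp_adj_def by blast
  define j where "j = (i + m) mod (2 * m)"
  have j: "j < 2 * m" using i by (simp add: j_def)
  let ?M = "2 * int m"
  have "(- 2 * int i) mod ?M = (- 2 * int j) mod ?M"
  proof -
    have "int j = (int i + int m) mod (2 * int m)" unfolding j_def by (simp add: zmod_int)
    then have "int j = int i + int m - ((int i + int m) div (2 * int m)) * (2 * int m)"
      by (metis minus_div_mult_eq_mod)
    then obtain q where "int j = int i + int m - q * (2 * int m)" by blast
    then have "- 2 * int j = - 2 * int i + (2 * q - 1) * ?M" by (simp add: algebra_simps)
    then show ?thesis by (metis mod_mult_self1)
  qed
  then have "Q (take i (relator m)) (fst (relator m ! i)) mod ?M
      = Q (take j (relator m)) (fst (relator m ! j)) mod ?M"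
    using qq[OF i] qq[OF j] by simp
  then have "fst (rho g) * Q (take i (relator m)) (fst (relator m ! i)) mod ?M
      = fst (rho g) * Q (take j (relator m)) (fst (relator m ! j)) mod ?M"
    by (metis mod_mult_right_eq)
  then have "Q (g @ take i (relator m)) (fst (relator m ! i)) mod ?M
      = Q (g @ take j (relator m)) (fst (relator m ! j)) mod ?M"
    unfolding Q_conj by (metis mod_add_left_eq)
  then show ?thesis using e f by (simp add: Rf_path j_def)
qed

lemma Rf_rtc: "(hyp_adj m)\<^sup>*\<^sup>* e f \<Longrightarrow> Rf m e = Rf m f"
  by (induction rule: rtranclp_induct) (auto dest: Rf_adj)

lemma key:
  assumes "is_hypergraph m L" "w \<noteq> []"
    and "path_edge m v w 0 \<in> L" and "path_edge m v w (length w - 1) \<in> L"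
  shows "2 * int m dvd Q [] (fst (hd w)) - Q (butlast w) (fst (last w))"
proof -
  let ?M = "2 * int m"
  obtain e0 where L: "L = {f. (hyp_adj m)\<^sup>*\<^sup>* e0 f}"
    using assms(1) unfolding is_hypergraph_def by blast
  have "Rf m (path_edge m v w 0) = Rf m e0" using assms(3) L Rf_rtc by blast
  moreover have "Rf m (path_edge m v w (length w - 1)) = Rf m e0" using assms(4) L Rf_rtc by blast
  ultimately have "Rf m (path_edge m v w 0) = Rf m (path_edge m v w (length w - 1))" by simp
  then have "Q (v @ take 0 w) (fst (w ! 0)) mod ?M = Q (v @ take (length w - 1) w) (fst (w ! (length w - 1))) mod ?M"
    unfolding Rf_path by simp
  moreover have "w ! 0 = hd w" using assms(2) by (simp add: hd_conv_nth)
  moreover have "w ! (length w - 1) = last w" using assms(2) by (simp add: last_conv_nth)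
  moreover have "take (length w - 1) w = butlast w" by (simp add: butlast_conv_take)
  ultimately have "Q (v @ []) (fst (hd w)) mod ?M = Q (v @ butlast w) (fst (last w)) mod ?M" by simp
  then have "(fst (rho v) * Q [] (fst (hd w)) + 2 * snd (rho v)) mod ?M
     = (fst (rho v) * Q (butlast w) (fst (last w)) + 2 * snd (rho v)) mod ?M"
    by (simp only: Q_conj)
  then have "?M dvd (fst (rho v) * Q [] (fst (hd w)) + 2 * snd (rho v)) - (fst (rho v) * Q (butlast w) (fst (last w)) + 2 * snd (rho v))"
    by (simp only: mod_eq_dvd_iff)
  then have "?M dvd fst (rho v) * (Q [] (fst (hd w)) - Q (butlast w) (fst (last w)))"
    by (simp add: algebra_simps)
  then show ?thesis using rho_sign[of v] by (auto, metis dvd_minus_iff minus_diff_eq)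
qed

lemma butlast_rep[simp]: "butlast (replicate n x) = replicate (n - 1) x"
  by (induction n) (auto simp: replicate_append_same[symmetric] gr0_conv_Suc)

lemma nd: "m \<ge> 3 \<Longrightarrow> \<not> (2 * int m dvd 4) \<and> \<not> (2 * int m dvd -4) \<and> \<not> (2 * int m dvd 2) \<and> \<not> (2 * int m dvd -2)"
proof -
  assume "m \<ge> 3"
  then have g: "2 * int m > 4" by simp
  have a: "\<not> (2 * int m dvd 4)" using zdvd_imp_le[of "2 * int m" 4] g by auto
  have b: "\<not> (2 * int m dvd 2)" using zdvd_imp_le[of "2 * int m" 2] g by auto
  show ?thesis using a b by simp
qed

lemma pw: "k \<noteq> 0 \<Longrightarrow> \<exists>K e. K \<ge> 1 \<and> pow_word g k = replicate K (g, e)"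
  unfolding pow_word_def by auto

theorem lemma4p4:
  fixes m :: nat and L :: "edge set" and v w :: word
  assumes "m \<ge> 3"
    and "is_hypergraph m L"
    and "w \<noteq> []"
    and "path_edge m v w 0 \<in> L"
    and "path_edge m v w (length w - 1) \<in> L"
    and "\<forall>i. 0 < i \<and> i < length w - 1 \<longrightarrow> path_edge m v w i \<notin> L"
  shows "\<not> (\<exists>k l :: int. k \<noteq> 0 \<and> l \<noteq> 0 \<and>
           (w = pow_word GA k @ [(GB, True)] @ pow_word GA l \<or>
            w = pow_word GB k @ [(GA, True)] @ pow_word GB l \<or>
            w = pow_word GA k @ pow_word GB l))"
proof
  assume "\<exists>k l :: int. k \<noteq> 0 \<and> l \<noteq> 0 \<and>
           (w = pow_word GA k @ [(GB, True)] @ pow_word GA l \<or>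
            w = pow_word GB k @ [(GA, True)] @ pow_word GB l \<or>
            w = pow_word GA k @ pow_word GB l)"
  then obtain k l :: int where k: "k \<noteq> 0" and l: "l \<noteq> 0" and
    w: "w = pow_word GA k @ [(GB, True)] @ pow_word GA l \<or>
            w = pow_word GB k @ [(GA, True)] @ pow_word GB l \<or>
            w = pow_word GA k @ pow_word GB l" by blast
  have D: "2 * int m dvd Q [] (fst (hd w)) - Q (butlast w) (fst (last w))"
    using key assms by blast
  have N: "\<not> (2 * int m dvd 4) \<and> \<not> (2 * int m dvd -4) \<and> \<not> (2 * int m dvd 2) \<and> \<not> (2 * int m dvd -2)"
    using nd assms(1) by blast
  from w show False
  proof (elim disjE)
    assume w1: "w = pow_word GA k @ [(GB, True)] @ pow_word GA l"
    obtain K e1 where K: "K \<ge> 1" "pow_word GA k = replicate K (GA, e1)" using pw[OF k] by blast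
    obtain L e2 where L: "L \<ge> 1" "pow_word GA l = replicate L (GA, e2)" using pw[OF l] by blast
    have "hd w = (GA, e1)" "last w = (GA, e2)"
      "butlast w = replicate K (GA, e1) @ [(GB, True)] @ replicate (L - 1) (GA, e2)"
      using K L w1 by (auto simp: butlast_append)
    then show False using D N
      by (auto simp: Q_def rho_append rho_rep comp_def split: if_splits)
  next
    assume w1: "w = pow_word GB k @ [(GA, True)] @ pow_word GB l"
    obtain K e1 where K: "K \<ge> 1" "pow_word GB k = replicate K (GB, e1)" using pw[OF k] by blast
    obtain L e2 where L: "L \<ge> 1" "pow_word GB l = replicate L (GB, e2)" using pw[OF l] by blast
    have "hd w = (GB, e1)" "last w = (GB, e2)"
      "butlast w = replicate K (GB, e1) @ [(GA, True)] @ replicate (L - 1) (GB, e2)"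
      using K L w1 by (auto simp: butlast_append)
    then show False using D N
      by (auto simp: Q_def rho_append rho_rep comp_def split: if_splits)
  next
    assume w1: "w = pow_word GA k @ pow_word GB l"
    obtain K e1 where K: "K \<ge> 1" "pow_word GA k = replicate K (GA, e1)" using pw[OF k] by blast
    obtain L e2 where L: "L \<ge> 1" "pow_word GB l = replicate L (GB, e2)" using pw[OF l] by blast
    have "hd w = (GA, e1)" "last w = (GB, e2)"
      "butlast w = replicate K (GA, e1) @ replicate (L - 1) (GB, e2)"
      using K L w1 by (auto simp: butlast_append)
    then show False using D N
      by (auto simp: Q_def rho_append rho_rep comp_def split: if_splits)
  qed
qed

end
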